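(* Let $\mathcal E\subset\mathcal L^n$ contain all balls and let $\diamond,\heartsuit\in\mathcal J(\mathcal E)$ with associated contractions $\psi_{\diamond,r},\psi_{\heartsuit,r}$. For all $x\in\mathbb{R}^n$ and $r>0$ with $(\diamond B(x,r))\cap\heartsuit B(x,r)\neq\emptyset$, $$\|\psi_{\diamond,r}(x)-\psi_{\heartsuit,r}(x)\|\le\frac{n}{2r^{n-1}\kappa_{n-1}}\,\|1_{\diamond B(x,r)}-1_{\heartsuit B(x,r)}\|_1,$$ where $\kappa_{n-1}$ is the volume of the unit ball in $\mathbb{R}^{n-1}$.
   Context: $\mathcal L^n$: measurable subsets of $\mathbb{R}^n$ of finite measure. $\mathcal J(\mathcal E)$: maps $\diamond:\mathcal E\to\mathcal L^n$ that are monotonic up to null sets, measure preserving, and map (essential) balls to (essential) balls. The associated contractions $\psi_{\diamond,r}$ are defined by $\diamond B(x,r)=B(\psi_{\diamond,r}(x),r)$ (closed balls, up to null sets). *)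

theory Defs
  imports "HOL-Analysis.Analysis"
begin

definition Ln :: "'a::euclidean_space set set" where
  "Ln = {A. A \<in> sets lebesgue \<and> emeasure lebesgue A < \<infinity>}"

definition ae_eq_set :: "'a::euclidean_space set \<Rightarrow> 'a set \<Rightarrow> bool" where
  "ae_eq_set A B \<longleftrightarrow> (A - B) \<union> (B - A) \<in> null_sets lebesgue"

definition J :: "'a::euclidean_space set set \<Rightarrow> ('a set \<Rightarrow> 'a set) set" where
  "J E = {d. (\<forall>A\<in>E. d A \<in> Ln)
           \<and> (\<forall>A\<in>E. \<forall>B\<in>E. A \<subseteq> B \<longrightarrow> d A - d B \<in> null_sets lebesgue)
           \<and> (\<forall>A\<in>E. emeasure lebesgue (d A) = emeasure lebesgue A)
           \<and> (\<forall>A\<in>E. \<forall>x r. r > 0 \<and> ae_eq_set A (cball x r) \<longrightarrow>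
                 (\<exists>y s. s > 0 \<and> ae_eq_set (d A) (cball y s)))}"

definition assoc_contraction :: "('a::euclidean_space set \<Rightarrow> 'a set) \<Rightarrow> (real \<Rightarrow> 'a \<Rightarrow> 'a) \<Rightarrow> bool" where
  "assoc_contraction d psi \<longleftrightarrow> (\<forall>x r. r > 0 \<longrightarrow> ae_eq_set (d (cball x r)) (cball (psi r x) r))"

end

theory Submission
  imports Defs
begin


lemma ubv_rec: "unit_ball_vol (real n + 2) = 2*pi/(real n + 2) * unit_ball_vol (real n)"
proof -
  have g: "Gamma ((real n + 2)/2 + 1) = (real n/2 + 1) * Gamma (real n/2 + 1)"
  proof -
    have "real n/2 + 1 \<notin> \<int>\<^sub>\<le>\<^sub>0" using nonpos_Ints_nonpos by force
    then have "Gamma (real n/2 + 1 + 1) = (real n/2 + 1) * Gamma (real n/2 + 1)"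
      using Gamma_plus1 by blast
    moreover have eq: "(real n + 2)/2 + 1 = real n/2 + 1 + 1" by simp
    ultimately show ?thesis by (subst eq)
  qed
  have p: "pi powr ((real n + 2)/2) = pi * pi powr (real n/2)"
    by (simp add: add_divide_distrib powr_add)
  have "Gamma (real n/2 + 1) > 0" by simp
  then show ?thesis unfolding unit_ball_vol_def g p by (simp add: field_simps)
qed

lemma ubv_ineq: "n \<ge> 1 \<Longrightarrow> 2 * unit_ball_vol (real (n - 1)) \<le> real n * unit_ball_vol (real n)"
proof (induction n rule: nat_less_induct)
  case (1 n)
  show ?case
  proof (cases "n \<le> 2")
    case True
    then have "n = 1 \<or> n = 2" using 1 by auto
    then show ?thesis using unit_ball_vol_2 pi_gt3 by auto
  next
    case False
    define m where "m = n - 2"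
    have m: "n = m + 2" "m \<ge> 1" using False m_def by auto
    have IH: "2 * unit_ball_vol (real (m - 1)) \<le> real m * unit_ball_vol (real m)"
      using 1 m by auto
    have e1: "unit_ball_vol (real (n - 1)) = 2*pi/(real m + 1) * unit_ball_vol (real (m-1))"
    proof -
      have "real (n - 1) = real (m-1) + 2" "real (m-1) + 2 = real m + 1" using m by auto
      then show ?thesis using ubv_rec[of "m-1"] by simp
    qed
    have e2: "unit_ball_vol (real n) = 2*pi/(real m + 2) * unit_ball_vol (real m)"
    proof -
      have "real n = real m + 2" using m by simp
      then show ?thesis using ubv_rec[of m] by simp
    qed
    have pos: "unit_ball_vol (real m) \<ge> 0" by simp
    have "2 * unit_ball_vol (real (m - 1)) \<le> (real m + 1) * unit_ball_vol (real m)"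
      using IH pos by (smt (verit) mult_right_mono)
    then have "2*pi/(real m + 1) * (2 * unit_ball_vol (real (m - 1))) \<le> 2*pi/(real m + 1) * ((real m + 1) * unit_ball_vol (real m))"
      by (intro mult_left_mono) auto
    also have "\<dots> = real n * unit_ball_vol (real n)" using e2 m by (simp add: field_simps)
    finally have fin: "2*pi/(real m + 1) * (2 * unit_ball_vol (real (m - 1))) \<le> real n * unit_ball_vol (real n)" .
    have "2 * unit_ball_vol (real (n-1)) = 2*pi/(real m + 1) * (2 * unit_ball_vol (real (m - 1)))"
      using e1 by simp
    then show ?thesis using fin by linarith
  qed
qed



lemma slice:
  fixes y u :: "'a::euclidean_space"
  assumes u: "norm u = 1" and r: "r > 0" and t: "0 < t" "t \<le> 2*r" and L: "L > 0"
  shows "ennreal (t/(2*r)) * emeasure lborel {s\<in>{0..L}. norm (y - s*\<^sub>R u) \<le> r}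
    \<le> emeasure lborel {s\<in>{0..L}. norm (y - s*\<^sub>R u) \<le> r \<and> \<not> norm (y - (s+t)*\<^sub>R u) \<le> r}
      + ennreal t * indicator (cball 0 r \<union> cball (L*\<^sub>R u) r) y"
    (is "ennreal ?c * emeasure lborel ?Sb \<le> emeasure lborel ?Sd + ?E")
proof -
  define a where "a = y \<bullet> u"
  define q where "q = (norm y)^2 - a^2"
  have uu: "u \<bullet> u = 1" using u by (simp add: dot_square_norm)
  have nsq: "(norm (y - s*\<^sub>R u))^2 = q + (s - a)^2" for s
    unfolding q_def a_def power2_norm_eq_inner
    by (simp add: inner_diff_left inner_diff_right inner_commute uu power2_eq_square algebra_simps)
  have q0: "q \<ge> 0" using nsq[of a] zero_le_power2[of "norm (y - a*\<^sub>R u)"] by simp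
  have sq: "norm v \<le> r \<longleftrightarrow> (norm v)^2 \<le> r^2" for v :: 'a
    using abs_le_square_iff[of "norm v" r] r by simp
  have iff: "norm (y - s*\<^sub>R u) \<le> r \<longleftrightarrow> q + (s - a)^2 \<le> r^2" for s
    using sq[of "y - s*\<^sub>R u"] nsq[of s] by simp
  have Sbm: "?Sb \<in> sets lborel" "?Sd \<in> sets lborel" by measurable
  show ?thesis
  proof (cases "q \<le> r^2")
    case False
    have "\<not> norm (y - s*\<^sub>R u) \<le> r" for s
    proof -
      have "(s-a)^2 \<ge> 0" by simp
      then have "\<not> q + (s-a)^2 \<le> r^2" using False by linarith
      then show ?thesis using iff by simp
    qed
    then have "?Sb = {}" by auto
    then have e0: "emeasure lborel ?Sb = 0" by (metis emeasure_empty)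
        show ?thesis unfolding e0 by simp
  next
    case True
    define h where "h = sqrt (r^2 - q)"
    have h0: "h \<ge> 0" and hr: "h \<le> r" and hsq: "h^2 = r^2 - q"
      using True q0 r by (auto simp: h_def real_sqrt_le_iff')
    have iff2: "norm (y - s*\<^sub>R u) \<le> r \<longleftrightarrow> \<bar>s - a\<bar> \<le> h" for s
    proof -
      have "(q + (s-a)^2 \<le> r^2) = ((s-a)^2 \<le> h^2)" using hsq by linarith
      then show ?thesis using iff[of s] abs_le_square_iff[of "s-a" h] abs_of_nonneg[OF h0] by simp
    qed
    have "?Sb \<subseteq> {a-h..a+h}" using iff2 by auto
    then have "emeasure lborel ?Sb \<le> ennreal (2*h)"
      using emeasure_mono[of ?Sb "{a-h..a+h}" lborel] h0 by simp
    then have "ennreal ?c * emeasure lborel ?Sb \<le> ennreal ?c * ennreal (2*h)"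
      by (rule mult_left_mono) simp
    also have "ennreal ?c * ennreal (2*h) = ennreal (?c * (2*h))"
      using r t h0 by (intro ennreal_mult[symmetric]) auto
    also have "?c * (2*h) = t*h/r" using r by (simp add: field_simps)
    finally have LHS: "ennreal ?c * emeasure lborel ?Sb \<le> ennreal (t*h/r)" .
    show ?thesis
    proof (cases "y \<in> cball 0 r \<union> cball (L*\<^sub>R u) r")
      case True
      then have Et: "?E = ennreal t" by simp
      have "ennreal (t*h/r) \<le> ennreal t" using hr r t h0
        by (intro ennreal_leI) (simp add: field_simps mult_left_mono)
      with LHS have "ennreal ?c * emeasure lborel ?Sb \<le> ennreal t" by (rule order_trans)
      also have "\<dots> = ?E" using Et by simp
      also have "?E \<le> emeasure lborel ?Sd + ?E" by (simp add: add_increasing)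
      finally show ?thesis .
    next
      case False
      then have y1: "norm y > r" and y2: "norm (y - L*\<^sub>R u) > r"
        by (auto simp: dist_norm norm_minus_commute)
      have a1: "\<bar>0 - a\<bar> > h" using y1 iff2[of 0] by simp
      have a2: "\<bar>L - a\<bar> > h" using y2 iff2[of L] by simp
      show ?thesis
      proof (cases "a + h < 0 \<or> a - h > L")
        case True
        then have "?Sb = {}" using iff2 by auto
        then have e0: "emeasure lborel ?Sb = 0" by (metis emeasure_empty)
        show ?thesis unfolding e0 by simp
      next
        case False
        then have in1: "a - h > 0" "a + h < L" using a1 a2 by auto
        have sub: "{max (a-h) (a+h-t) <.. a+h} \<subseteq> ?Sd"
        proof
          fix s assume s: "s \<in> {max (a-h) (a+h-t) <.. a+h}"
          then have "\<bar>s - a\<bar> \<le> h" "\<not> \<bar>s + t - a\<bar> \<le> h" "s \<in> {0..L}" using in1 h0 t by auto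
          then show "s \<in> ?Sd" using iff2[of s] iff2[of "s+t"] by auto
        qed
        have "ennreal (t*h/r) \<le> ennreal (a+h - max (a-h) (a+h-t))"
        proof (intro ennreal_leI)
          have "t*h \<le> (2*r)*h" by (rule mult_right_mono) (use t h0 in auto)
          then have "t*h/r \<le> 2*h" using r by (simp add: pos_divide_le_eq mult.commute mult.left_commute)
          moreover have "t*h/r \<le> t" using t r h0 hr by (simp add: field_simps mult_left_mono)
          ultimately show "t*h/r \<le> a+h - max (a-h) (a+h-t)" by linarith
        qed
        also have "\<dots> = emeasure lborel {max (a-h) (a+h-t) <.. a+h}" using h0 t by simp
        also have "\<dots> \<le> emeasure lborel ?Sd" using sub Sbm by (intro emeasure_mono) auto
        also have "emeasure lborel ?Sd \<le> emeasure lborel ?Sd + ?E" by (simp add: add_increasing2)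
        finally show ?thesis using LHS by (rule order_trans[rotated])
      qed
    qed
  qed
qed



lemma test2:
  fixes u :: "'a::euclidean_space"
  shows "{p::'a\<times>real. snd p \<in> {0..L} \<and> norm (fst p - snd p *\<^sub>R u) \<le> r \<and> \<not> norm (fst p - (snd p + t) *\<^sub>R u) \<le> r} \<in> sets (lborel \<Otimes>\<^sub>M lborel)"
proof -
  have "sets (lborel \<Otimes>\<^sub>M lborel) = sets (borel :: ('a\<times>real) measure)"
    using borel_prod by (metis sets_lborel sets_pair_measure_cong)
  moreover have "{p::'a\<times>real. snd p \<in> {0..L} \<and> norm (fst p - snd p *\<^sub>R u) \<le> r \<and> \<not> norm (fst p - (snd p + t) *\<^sub>R u) \<le> r} = ({p. 0 \<le> snd p} \<inter> {p. snd p \<le> L}) \<inter> {p. norm (fst p - snd p *\<^sub>R u) \<le> r} \<inter> {p. r < norm (fst p - (snd p + t) *\<^sub>R u)}"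
    by auto
  moreover have "\<dots> \<in> sets borel"
    by (intro sets.Int borel_closed borel_open open_Collect_less closed_Collect_le continuous_intros)
  ultimately show ?thesis by simp
qed

lemma trans_int:
  fixes c :: "'a::euclidean_space"
  assumes "f \<in> borel_measurable borel"
  shows "(\<integral>\<^sup>+y. f (y - c) \<partial>lborel) = (\<integral>\<^sup>+y. f y \<partial>lborel)"
proof -
  have e: "distr lborel borel (\<lambda>x. (-c) + x) = (lborel :: 'a measure)"
    using lborel_affine[of 1 "-c"] by (simp add: density_1)
  have "(\<integral>\<^sup>+y. f y \<partial>lborel) = (\<integral>\<^sup>+y. f y \<partial>(distr lborel borel (\<lambda>x. (-c) + x)))"
    by (subst e) (rule refl)
  also have "\<dots> = (\<integral>\<^sup>+y. f ((-c) + y) \<partial>lborel)"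
    using assms by (subst nn_integral_distr) auto
  finally show ?thesis by simp
qed


lemma dist_shift:
  fixes u y :: "'a::euclidean_space"
  shows "dist (t *\<^sub>R u) (y - s *\<^sub>R u) = norm (y - (s + t) *\<^sub>R u)"
proof -
  have "t *\<^sub>R u - (y - s *\<^sub>R u) = (s+t) *\<^sub>R u - y" by (simp add: algebra_simps)
  then show ?thesis by (metis dist_norm norm_minus_commute)
qed

lemma ind_shift_meas:
  fixes c :: "'a::euclidean_space"
  assumes "D \<in> sets borel"
  shows "(\<lambda>y. indicator D (y - c) :: ennreal) \<in> borel_measurable lborel"
proof -
  have h1: "(\<lambda>y::'a. y - c) \<in> borel_measurable borel"
    by (intro borel_measurable_continuous_onI continuous_intros)
  have h2: "(indicator D :: 'a \<Rightarrow> ennreal) \<in> borel_measurable borel"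
    using assms by (rule borel_measurable_indicator)
  have "(\<lambda>y. indicator D (y - c) :: ennreal) \<in> borel_measurable borel"
    by (rule measurable_compose[OF h1 h2])
  then show ?thesis by simp
qed

lemma PB_sets:
  fixes u :: "'a::euclidean_space"
  shows "{p::'a\<times>real. snd p \<in> {0..L} \<and> norm (fst p - snd p *\<^sub>R u) \<le> r} \<in> sets (lborel \<Otimes>\<^sub>M lborel)"
proof -
  have "sets (lborel \<Otimes>\<^sub>M lborel) = sets (borel :: ('a\<times>real) measure)"
    using borel_prod by (metis sets_lborel sets_pair_measure_cong)
  moreover have "{p::'a\<times>real. snd p \<in> {0..L} \<and> norm (fst p - snd p *\<^sub>R u) \<le> r} = ({p. 0 \<le> snd p} \<inter> {p. snd p \<le> L}) \<inter> {p. norm (fst p - snd p *\<^sub>R u) \<le> r}"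
    by auto
  moreover have "\<dots> \<in> sets borel"
  proof (rule borel_closed)
    have c1: "closed {p::'a\<times>real. 0 \<le> snd p}" by (intro closed_Collect_le continuous_intros)
    have c2: "closed {p::'a\<times>real. snd p \<le> L}" by (intro closed_Collect_le continuous_intros)
    have c3: "closed {p::'a\<times>real. norm (fst p - snd p *\<^sub>R u) \<le> r}" by (intro closed_Collect_le continuous_intros)
    show "closed (({p::'a\<times>real. 0 \<le> snd p} \<inter> {p. snd p \<le> L}) \<inter> {p. norm (fst p - snd p *\<^sub>R u) \<le> r})"
      using c1 c2 c3 by (intro closed_Int)
  qed
  ultimately show ?thesis by simp
qed

lemma key_L:
  fixes u :: "'a::euclidean_space"
  assumes u: "norm u = 1" and r: "r>0" and t: "0<t" "t \<le> 2*r" and L: "L>0"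
  shows "ennreal (t/(2*r)) * (ennreal L * emeasure lborel (cball (0::'a) r))
    \<le> ennreal L * emeasure lborel (cball 0 r - cball (t *\<^sub>R u) r)
      + ennreal t * emeasure lborel (cball 0 r \<union> cball (L *\<^sub>R u) r)"
proof -
  define D where "D = cball 0 r - cball (t *\<^sub>R u) r"
  define B where "B = (cball 0 r :: 'a set)"
  define PD where "PD = {p::'a\<times>real. snd p \<in> {0..L} \<and> norm (fst p - snd p *\<^sub>R u) \<le> r \<and> \<not> norm (fst p - (snd p + t) *\<^sub>R u) \<le> r}"
  define PB where "PB = {p::'a\<times>real. snd p \<in> {0..L} \<and> norm (fst p - snd p *\<^sub>R u) \<le> r}"
  have mPD: "PD \<in> sets (lborel \<Otimes>\<^sub>M lborel)" unfolding PD_def by (rule test2)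
  have mPB: "PB \<in> sets (lborel \<Otimes>\<^sub>M lborel)" unfolding PB_def by (rule PB_sets)
  have Dsets: "D \<in> sets borel" unfolding D_def by (intro sets.Diff borel_closed closed_cball)
  have Bsets: "B \<in> sets borel" unfolding B_def by (intro borel_closed closed_cball)
  have cpD: "case_prod (\<lambda>y s. indicator PD (y,s) :: ennreal) \<in> borel_measurable (lborel \<Otimes>\<^sub>M lborel)"
    using mPD by (simp add: case_prod_beta')
  have cpB: "case_prod (\<lambda>y s. indicator PB (y,s) :: ennreal) \<in> borel_measurable (lborel \<Otimes>\<^sub>M lborel)"
    using mPB by (simp add: case_prod_beta')
  have FD: "(\<integral>\<^sup>+ s. (\<integral>\<^sup>+ y. indicator PD (y,s) \<partial>lborel) \<partial>lborel) = (\<integral>\<^sup>+ y. (\<integral>\<^sup>+ s. indicator PD (y,s) \<partial>lborel) \<partial>lborel)"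
    by (rule lborel_pair.Fubini'[OF cpD])
  have FB: "(\<integral>\<^sup>+ s. (\<integral>\<^sup>+ y. indicator PB (y,s) \<partial>lborel) \<partial>lborel) = (\<integral>\<^sup>+ y. (\<integral>\<^sup>+ s. indicator PB (y,s) \<partial>lborel) \<partial>lborel)"
    by (rule lborel_pair.Fubini'[OF cpB])
  have innerD: "(\<integral>\<^sup>+ y. indicator PD (y,s) \<partial>lborel) = indicator {0..L} s * emeasure lborel D" for s
  proof -
    have "indicator PD (y,s) = (indicator {0..L} s * indicator D (y - s *\<^sub>R u) :: ennreal)" for y
      unfolding PD_def D_def using dist_shift[of t u y s] by (auto simp: indicator_def)
    then have "(\<integral>\<^sup>+ y. indicator PD (y,s) \<partial>lborel) = (\<integral>\<^sup>+ y. indicator {0..L} s * indicator D (y - s *\<^sub>R u) \<partial>lborel)"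
      by simp
    also have "\<dots> = indicator {0..L} s * (\<integral>\<^sup>+ y. indicator D (y - s *\<^sub>R u) \<partial>lborel)"
      using Dsets by (intro nn_integral_cmult ind_shift_meas)
    also have "(\<integral>\<^sup>+ y. indicator D (y - s *\<^sub>R u) \<partial>lborel) = (\<integral>\<^sup>+ y. indicator D y \<partial>lborel)"
      by (intro trans_int borel_measurable_indicator Dsets)
    also have "\<dots> = emeasure lborel D" using Dsets by simp
    finally show ?thesis .
  qed
  have innerB: "(\<integral>\<^sup>+ y. indicator PB (y,s) \<partial>lborel) = indicator {0..L} s * emeasure lborel B" for s
  proof -
    have "indicator PB (y,s) = (indicator {0..L} s * indicator B (y - s *\<^sub>R u) :: ennreal)" for y
      unfolding PB_def B_def by (auto simp: indicator_def)
    then have "(\<integral>\<^sup>+ y. indicator PB (y,s) \<partial>lborel) = (\<integral>\<^sup>+ y. indicator {0..L} s * indicator B (y - s *\<^sub>R u) \<partial>lborel)"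
      by simp
    also have "\<dots> = indicator {0..L} s * (\<integral>\<^sup>+ y. indicator B (y - s *\<^sub>R u) \<partial>lborel)"
      using Bsets by (intro nn_integral_cmult ind_shift_meas)
    also have "(\<integral>\<^sup>+ y. indicator B (y - s *\<^sub>R u) \<partial>lborel) = (\<integral>\<^sup>+ y. indicator B y \<partial>lborel)"
      by (intro trans_int borel_measurable_indicator Bsets)
    also have "\<dots> = emeasure lborel B" using Bsets by simp
    finally show ?thesis .
  qed
  have LD: "(\<integral>\<^sup>+ s. (\<integral>\<^sup>+ y. indicator PD (y,s) \<partial>lborel) \<partial>lborel) = ennreal L * emeasure lborel D"
    unfolding innerD using L by (subst nn_integral_multc) auto
  have LB: "(\<integral>\<^sup>+ s. (\<integral>\<^sup>+ y. indicator PB (y,s) \<partial>lborel) \<partial>lborel) = ennreal L * emeasure lborel B"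
    unfolding innerB using L by (subst nn_integral_multc) auto
  define gD where "gD y = (\<integral>\<^sup>+ s. indicator PD (y,s) \<partial>lborel)" for y
  define gB where "gB y = (\<integral>\<^sup>+ s. indicator PB (y,s) \<partial>lborel)" for y
  have mgD: "gD \<in> borel_measurable lborel" unfolding gD_def
    by (rule lborel.borel_measurable_nn_integral[OF cpD])
  have mgB: "gB \<in> borel_measurable lborel" unfolding gB_def
    by (rule lborel.borel_measurable_nn_integral[OF cpB])
  have pt: "ennreal (t/(2*r)) * gB y \<le> gD y + ennreal t * indicator (cball 0 r \<union> cball (L*\<^sub>R u) r) y" for y
  proof -
    have e1: "gB y = emeasure lborel {s\<in>{0..L}. norm (y - s*\<^sub>R u) \<le> r}"
    proof -
      have "indicator PB (y,s) = (indicator {s\<in>{0..L}. norm (y - s*\<^sub>R u) \<le> r} s :: ennreal)" for s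
        unfolding PB_def by (simp add: indicator_def)
      moreover have "{s\<in>{0..L}. norm (y - s*\<^sub>R u) \<le> r} \<in> sets lborel" by measurable
      ultimately show ?thesis unfolding gB_def by simp
    qed
    have e2: "gD y = emeasure lborel {s\<in>{0..L}. norm (y - s*\<^sub>R u) \<le> r \<and> \<not> norm (y - (s+t)*\<^sub>R u) \<le> r}"
    proof -
      have "indicator PD (y,s) = (indicator {s\<in>{0..L}. norm (y - s*\<^sub>R u) \<le> r \<and> \<not> norm (y - (s+t)*\<^sub>R u) \<le> r} s :: ennreal)" for s
        unfolding PD_def by (simp add: indicator_def)
      moreover have "{s\<in>{0..L}. norm (y - s*\<^sub>R u) \<le> r \<and> \<not> norm (y - (s+t)*\<^sub>R u) \<le> r} \<in> sets lborel" by measurable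
      ultimately show ?thesis unfolding gD_def by simp
    qed
    show ?thesis unfolding e1 e2 by (rule slice[OF u r t L])
  qed
  have "ennreal (t/(2*r)) * (ennreal L * emeasure lborel B) = ennreal (t/(2*r)) * (\<integral>\<^sup>+ y. gB y \<partial>lborel)"
    using LB FB unfolding gB_def by simp
  also have "\<dots> = (\<integral>\<^sup>+ y. ennreal (t/(2*r)) * gB y \<partial>lborel)"
    using mgB by (rule nn_integral_cmult[symmetric])
  also have "\<dots> \<le> (\<integral>\<^sup>+ y. gD y + ennreal t * indicator (cball 0 r \<union> cball (L*\<^sub>R u) r) y \<partial>lborel)"
    by (intro nn_integral_mono pt)
  also have "\<dots> = (\<integral>\<^sup>+ y. gD y \<partial>lborel) + (\<integral>\<^sup>+ y. ennreal t * indicator (cball 0 r \<union> cball (L*\<^sub>R u) r) y \<partial>lborel)"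
  proof (rule nn_integral_add[OF mgD])
    have A: "(cball 0 r \<union> cball (L *\<^sub>R u) r) \<in> sets lborel"
      by (simp only: sets_lborel) (intro sets.Un borel_closed closed_cball)
    show "(\<lambda>x. ennreal t * indicator (cball 0 r \<union> cball (L *\<^sub>R u) r) x) \<in> borel_measurable lborel"
      by (rule borel_measurable_times_ennreal[OF borel_measurable_const borel_measurable_indicator[OF A]])
  qed
  also have "(\<integral>\<^sup>+ y. ennreal t * indicator (cball 0 r \<union> cball (L*\<^sub>R u) r) y \<partial>lborel) = ennreal t * emeasure lborel (cball 0 r \<union> cball (L *\<^sub>R u) r)"
    by (intro nn_integral_cmult_indicator) auto
  also have "(\<integral>\<^sup>+ y. gD y \<partial>lborel) = ennreal L * emeasure lborel D"
    using LD FD unfolding gD_def by simp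
  finally show ?thesis unfolding B_def D_def .
qed


lemma key:
  fixes v :: "'a::euclidean_space"
  assumes r: "r > 0" and v: "norm v \<le> 2*r"
  shows "norm v / (2*r) * (unit_ball_vol DIM('a) * r^DIM('a)) \<le> measure lborel (cball 0 r - cball v r)"
proof (cases "v = 0")
  case True
  then show ?thesis by simp
next
  case False
  define t where "t = norm v"
  define u where "u = v /\<^sub>R t"
  define K where "K = unit_ball_vol DIM('a) * r^DIM('a)"
  define m where "m = measure lborel (cball 0 r - cball v r)"
  have t0: "t > 0" using False t_def by simp
  have t2: "t \<le> 2*r" using v t_def by simp
  have u1: "norm u = 1" using t0 unfolding u_def t_def by simp
  have tu: "t *\<^sub>R u = v" using t0 unfolding u_def by simp
  have K0: "K > 0" using r unfolding K_def by simp
  have eB: "emeasure lborel (cball (c::'a) r) = ennreal K" for c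
    unfolding K_def using r by (simp add: emeasure_cball)
  have Dfin: "emeasure lborel (cball 0 r - cball v r) \<le> ennreal K"
    using emeasure_mono[of "cball 0 r - cball v r" "cball (0::'a) r" lborel] eB by auto
  then have eD: "emeasure lborel (cball 0 r - cball v r) = ennreal m"
    unfolding m_def by (intro emeasure_eq_ennreal_measure) (auto simp: top_unique)
  have m0: "m \<ge> 0" unfolding m_def by simp
  have ineq: "t/(2*r) * L * K \<le> L * m + t * (2*K)" if L: "L > 0" for L
  proof -
    have "ennreal (t/(2*r)) * (ennreal L * emeasure lborel (cball (0::'a) r))
      \<le> ennreal L * emeasure lborel (cball 0 r - cball (t *\<^sub>R u) r)
        + ennreal t * emeasure lborel (cball 0 r \<union> cball (L *\<^sub>R u) r)"
      by (rule key_L[OF u1 r t0 t2 L])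
    also have "emeasure lborel (cball 0 r \<union> cball (L *\<^sub>R u) r) \<le> ennreal (2*K)"
    proof -
      have "emeasure lborel (cball 0 r \<union> cball (L *\<^sub>R u) r) \<le> emeasure lborel (cball (0::'a) r) + emeasure lborel (cball (L *\<^sub>R u) r)"
        by (intro emeasure_subadditive) auto
      also have "\<dots> = ennreal (2*K)" using eB K0 by (simp add: ennreal_plus[symmetric] del: ennreal_plus)
      finally show ?thesis .
    qed
    then have "ennreal L * emeasure lborel (cball 0 r - cball (t *\<^sub>R u) r) + ennreal t * emeasure lborel (cball 0 r \<union> cball (L *\<^sub>R u) r)
       \<le> ennreal L * emeasure lborel (cball 0 r - cball (t *\<^sub>R u) r) + ennreal t * ennreal (2*K)"
      by (intro add_left_mono mult_left_mono) auto
    finally have "ennreal (t/(2*r)) * (ennreal L * ennreal K) \<le> ennreal L * ennreal m + ennreal t * ennreal (2*K)"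
      using eB eD tu by simp
    then have "ennreal (t/(2*r) * L * K) \<le> ennreal (L * m + t * (2*K))"
      using t0 r L K0 m0 by (simp add: ennreal_mult[symmetric] ennreal_plus[symmetric] mult.assoc del: ennreal_plus)
    then show ?thesis using L t0 K0 m0 by (subst (asm) ennreal_le_iff) auto
  qed
  have "t/(2*r) * K \<le> m"
  proof (rule ccontr)
    assume "\<not> t/(2*r) * K \<le> m"
    define \<delta> where "\<delta> = t/(2*r) * K - m"
    have d0: "\<delta> > 0" using \<open>\<not> t/(2*r) * K \<le> m\<close> \<delta>_def by simp
    define L where "L = 4*t*K/\<delta> + 1"
    have L0: "L > 0" using t0 K0 d0 L_def by (simp add: add_pos_nonneg)
    have "t/(2*r) * L * K \<le> L * m + t * (2*K)" by (rule ineq[OF L0])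
    then have "L * \<delta> \<le> 2*t*K" unfolding \<delta>_def by (simp add: algebra_simps)
    moreover have "L * \<delta> = 4*t*K + \<delta>" unfolding L_def using d0 by (simp add: field_simps)
    moreover have "t*K > 0" using t0 K0 by simp
    ultimately show False using d0 by linarith
  qed
  then show ?thesis unfolding t_def K_def m_def .
qed


lemma meas_leb_lborel:
  fixes S :: "'a::euclidean_space set"
  assumes "S \<in> sets borel"
  shows "measure lebesgue S = measure lborel S"
  using assms by (simp add: measure_completion)

theorem lemma7p3:
  fixes E :: "'a::euclidean_space set set"
    and d h :: "'a set \<Rightarrow> 'a set"
    and psid psih :: "real \<Rightarrow> 'a \<Rightarrow> 'a"
    and x :: 'a and r :: real
  assumes "E \<subseteq> Ln"
    and "\<And>y s. s > 0 \<Longrightarrow> cball y s \<in> E"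
    and "d \<in> J E" and "h \<in> J E"
    and "assoc_contraction d psid" and "assoc_contraction h psih"
    and "r > 0"
    and "emeasure lebesgue (d (cball x r) \<inter> h (cball x r)) > 0"
  shows "norm (psid r x - psih r x)
         \<le> real DIM('a) / (2 * r ^ (DIM('a) - 1) * unit_ball_vol (real (DIM('a) - 1)))
           * (\<integral>y. \<bar>indicator (d (cball x r)) y - indicator (h (cball x r)) y\<bar> \<partial>lebesgue)"
proof -
  note r = \<open>r > 0\<close>
  define a where "a = psid r x"
  define b where "b = psih r x"
  define A where "A = d (cball x r)"
  define H where "H = h (cball x r)"
  define Ca where "Ca = cball a r"
  define Cb where "Cb = cball b r"
  define n where "n = DIM('a)"
  define K where "K = unit_ball_vol n * r^n"
  define t where "t = norm (a - b)"
  have n1: "n \<ge> 1" unfolding n_def using DIM_positive by (simp add: Suc_le_eq)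
  have cE: "cball x r \<in> E" using assms(2) r by simp
  have "\<forall>A\<in>E. d A \<in> Ln" using assms(3) unfolding J_def mem_Collect_eq by (rule conjunct1)
  then have "A \<in> Ln" using cE unfolding A_def by blast
  then have AL: "A \<in> sets lebesgue" unfolding Ln_def by blast
  have "\<forall>A\<in>E. h A \<in> Ln" using assms(4) unfolding J_def mem_Collect_eq by (rule conjunct1)
  then have "H \<in> Ln" using cE unfolding H_def by blast
  then have HL: "H \<in> sets lebesgue" unfolding Ln_def by blast
  have N1: "(A - Ca) \<union> (Ca - A) \<in> null_sets lebesgue"
  proof -
    have "\<forall>x r. r > 0 \<longrightarrow> ae_eq_set (d (cball x r)) (cball (psid r x) r)"
      using assms(5) unfolding assoc_contraction_def .
    then have "ae_eq_set (d (cball x r)) (cball (psid r x) r)" using r by blast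
    then show ?thesis unfolding ae_eq_set_def A_def Ca_def a_def .
  qed
  have N2: "(H - Cb) \<union> (Cb - H) \<in> null_sets lebesgue"
  proof -
    have "\<forall>x r. r > 0 \<longrightarrow> ae_eq_set (h (cball x r)) (cball (psih r x) r)"
      using assms(6) unfolding assoc_contraction_def .
    then have "ae_eq_set (h (cball x r)) (cball (psih r x) r)" using r by blast
    then show ?thesis unfolding ae_eq_set_def H_def Cb_def b_def .
  qed
  have CaB: "Ca \<in> sets borel" "Cb \<in> sets borel" unfolding Ca_def Cb_def by (auto intro: borel_closed)
  have CaL: "Ca \<in> sets lebesgue" "Cb \<in> sets lebesgue" using CaB by auto
  have t2: "t \<le> 2*r"
  proof (cases "Ca \<inter> Cb = {}")
    case True
    have "A \<inter> H \<subseteq> (A - Ca) \<union> (Ca - A) \<union> ((H - Cb) \<union> (Cb - H))" using True by auto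
    moreover have "(A - Ca) \<union> (Ca - A) \<union> ((H - Cb) \<union> (Cb - H)) \<in> null_sets lebesgue"
      using N1 N2 by auto
    ultimately have "A \<inter> H \<in> null_sets lebesgue" using AL HL
      by (meson null_sets_subset sets.Int)
    then have "emeasure lebesgue (A \<inter> H) = 0" by auto
    then show ?thesis using assms(8) unfolding A_def H_def by simp
  next
    case False
    then obtain z where z: "z \<in> Ca" "z \<in> Cb" by auto
    then have "dist a z \<le> r" "dist b z \<le> r" unfolding Ca_def Cb_def by auto
    then have "dist a b \<le> 2*r" using dist_triangle3[of a b z] dist_commute[of z a] dist_commute[of z b] by linarith
    then show ?thesis unfolding t_def by (simp add: dist_norm)
  qed
  have AE: "AE y in lebesgue. y \<notin> ((A - Ca) \<union> (Ca - A)) \<union> ((H - Cb) \<union> (Cb - H))"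
    using N1 N2 by (intro AE_not_in) auto
  have int_eq: "(\<integral>y. \<bar>indicator A y - indicator H y :: real\<bar> \<partial>lebesgue) = (\<integral>y. (indicator (Ca - Cb) y + indicator (Cb - Ca) y :: real) \<partial>lebesgue)"
  proof (rule integral_cong_AE)
    show "(\<lambda>y. \<bar>indicator A y - indicator H y :: real\<bar>) \<in> borel_measurable lebesgue"
      by (rule borel_measurable_abs[OF borel_measurable_diff[OF borel_measurable_indicator[OF AL] borel_measurable_indicator[OF HL]]])
    show "(\<lambda>y. indicator (Ca - Cb) y + indicator (Cb - Ca) y :: real) \<in> borel_measurable lebesgue"
      by (rule borel_measurable_add[OF borel_measurable_indicator[OF sets.Diff[OF CaL(1) CaL(2)]] borel_measurable_indicator[OF sets.Diff[OF CaL(2) CaL(1)]]])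
    show "AE y in lebesgue. \<bar>indicator A y - indicator H y :: real\<bar> = indicator (Ca - Cb) y + indicator (Cb - Ca) y"
      using AE
    proof eventually_elim
      case (elim y)
      then have e1: "(y \<in> A) = (y \<in> Ca)" and e2: "(y \<in> H) = (y \<in> Cb)" by blast+
      show ?case unfolding indicator_def e1 e2
        by (cases "y \<in> Ca"; cases "y \<in> Cb") simp_all
    qed
  qed
  have fin: "emeasure lebesgue (Ca - Cb) < \<infinity>" "emeasure lebesgue (Cb - Ca) < \<infinity>"
  proof -
    have "emeasure lebesgue (Ca - Cb) \<le> emeasure lebesgue Ca" using CaL by (intro emeasure_mono) auto
    also have "\<dots> = emeasure lborel Ca" using CaB by (simp add: emeasure_completion)
    also have "\<dots> < \<infinity>" unfolding Ca_def by (rule emeasure_lborel_cball_finite)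
    finally show "emeasure lebesgue (Ca - Cb) < \<infinity>" .
    have "emeasure lebesgue (Cb - Ca) \<le> emeasure lebesgue Cb" using CaL by (intro emeasure_mono) auto
    also have "\<dots> = emeasure lborel Cb" using CaB by (simp add: emeasure_completion)
    also have "\<dots> < \<infinity>" unfolding Cb_def by (rule emeasure_lborel_cball_finite)
    finally show "emeasure lebesgue (Cb - Ca) < \<infinity>" .
  qed
  have int_eq2: "(\<integral>y. (indicator (Ca - Cb) y + indicator (Cb - Ca) y :: real) \<partial>lebesgue) = measure lebesgue (Ca - Cb) + measure lebesgue (Cb - Ca)"
  proof -
    have i1: "integrable lebesgue (indicator (Ca - Cb) :: 'a \<Rightarrow> real)"
      using fin CaL by (simp add: integrable_indicator_iff sets.Diff)
    have i2: "integrable lebesgue (indicator (Cb - Ca) :: 'a \<Rightarrow> real)"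
      using fin CaL by (simp add: integrable_indicator_iff sets.Diff)
    show ?thesis using Bochner_Integration.integral_add[OF i1 i2] by simp
  qed
  have m1: "t/(2*r) * K \<le> measure lebesgue (Ca - Cb)"
  proof -
    have "Ca - Cb = (+) a ` (cball 0 r - cball (b - a) r)"
      unfolding Ca_def Cb_def using cball_translation[of a 0 r] cball_translation[of a "b - a" r]
      by (simp add: translation_diff)
    then have "measure lebesgue (Ca - Cb) = measure lebesgue (cball 0 r - cball (b - a) r)"
      by (simp add: measure_translation)
    also have "\<dots> = measure lborel (cball 0 r - cball (b - a) r)"
      by (intro meas_leb_lborel) (auto intro: borel_closed)
    finally have e: "measure lebesgue (Ca - Cb) = measure lborel (cball 0 r - cball (b - a) r)" .
    have "norm (b - a) = t" unfolding t_def by (simp add: norm_minus_commute)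
    then show ?thesis using key[of r "b - a"] r t2 unfolding e K_def n_def by simp
  qed
  have m2: "t/(2*r) * K \<le> measure lebesgue (Cb - Ca)"
  proof -
    have "Cb - Ca = (+) b ` (cball 0 r - cball (a - b) r)"
      unfolding Ca_def Cb_def using cball_translation[of b 0 r] cball_translation[of b "a - b" r]
      by (simp add: translation_diff)
    then have "measure lebesgue (Cb - Ca) = measure lebesgue (cball 0 r - cball (a - b) r)"
      by (simp add: measure_translation)
    also have "\<dots> = measure lborel (cball 0 r - cball (a - b) r)"
      by (intro meas_leb_lborel) (auto intro: borel_closed)
    finally have e: "measure lebesgue (Cb - Ca) = measure lborel (cball 0 r - cball (a - b) r)" .
    show ?thesis using key[of r "a - b"] r t2 unfolding e K_def n_def t_def by simp
  qed
  define I where "I = (\<integral>y. \<bar>indicator A y - indicator H y :: real\<bar> \<partial>lebesgue)"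
  have I: "t/r * K \<le> I" unfolding I_def int_eq int_eq2 using m1 m2 r by (simp add: field_simps)
  define k1 where "k1 = unit_ball_vol (real (n - 1))"
  have k1: "k1 > 0" unfolding k1_def by simp
  have kk: "2 * k1 \<le> real n * unit_ball_vol (real n)" unfolding k1_def by (rule ubv_ineq[OF n1])
  have rn: "r^n = r * r^(n-1)" using n1 by (metis Suc_diff_le diff_Suc_1 power_Suc)
  have rp: "r^(n-1) > 0" using r by simp
  have "t/r * K = t * unit_ball_vol n * r^(n-1)" unfolding K_def rn using r by (simp add: field_simps)
  have c0: "real n / (2 * r^(n-1) * k1) \<ge> 0" using k1 rp by simp
  have "t \<le> t * (real n * unit_ball_vol n / (2 * k1))"
  proof -
    have "1 \<le> real n * unit_ball_vol n / (2 * k1)" using kk k1 by simp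
    moreover have "t \<ge> 0" unfolding t_def by simp
    ultimately show ?thesis by (metis mult.right_neutral mult_left_mono)
  qed
  also have "\<dots> = real n / (2 * r^(n-1) * k1) * (t/r * K)"
    unfolding K_def rn using r rp k1 by (simp add: field_simps)
  also have "\<dots> \<le> real n / (2 * r^(n-1) * k1) * I"
    using I c0 by (rule mult_left_mono)
  finally show ?thesis unfolding t_def a_def b_def I_def A_def H_def k1_def n_def .
qed

end
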